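(* For $D\ge1$ let $\mathbb V(D):=\sup\{|u(0)|^2:\ u\in H^1_{\mathrm{per}}(0,2\pi),\ \int_0^{2\pi}u\,dx=0,\ \|u\|^2=1,\ \|u'\|^2=D\}$. Then for all $D\ge1$, $$\mathbb V(D)<D^{1/2}-\frac1\pi .$$
   Context: Functions are complex-valued and $2\pi$-periodic; $\|\cdot\|$ is the $L_2(0,2\pi)$ norm. *)

theory Defs
  imports "HOL-Analysis.Analysis"
begin

text \<open>u is in H^1_per(0,2pi) with weak derivative v: u is 2pi-periodic and
  absolutely continuous on [0,2pi], u(x) = u(0) + int_0^x v, where v is in
  L^2(0,2pi) (hence in L^1). u is identified with its continuous representative.\<close>
definition H1per :: "(real \<Rightarrow> complex) \<Rightarrow> (real \<Rightarrow> complex) \<Rightarrow> bool" where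
  "H1per u v \<longleftrightarrow>
     (\<forall>x. u (x + 2*pi) = u x) \<and>
     v absolutely_integrable_on {0..2*pi} \<and>
     (\<lambda>x. (cmod (v x))^2) integrable_on {0..2*pi} \<and>
     (\<forall>x\<in>{0..2*pi}. u x = u 0 + integral {0..x} v)"

definition VV :: "real \<Rightarrow> real" where
  "VV D = Sup {(cmod (u 0))^2 | u v. H1per u v
              \<and> integral {0..2*pi} u = 0
              \<and> integral {0..2*pi} (\<lambda>x. (cmod (u x))^2) = 1
              \<and> integral {0..2*pi} (\<lambda>x. (cmod (v x))^2) = D}"

end

theory Submission
  imports Defs
begin


lemma ibp_local:
  fixes v :: "real \<Rightarrow> complex"
  assumes pq: "a \<le> p" "p \<le> q" "q \<le> b"
    and v: "v absolutely_integrable_on {a..b}"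
    and wd: "\<And>x. x \<in> {a..b} \<Longrightarrow> (w has_real_derivative w' x) (at x within {a..b})"
    and wc: "continuous_on {a..b} w'"
    and L: "\<And>x. x \<in> {a..b} \<Longrightarrow> \<bar>w' x\<bar> \<le> L"
  defines "U \<equiv> \<lambda>x. integral {a..x} v"
  defines "m \<equiv> \<lambda>x. integral {a..x} (\<lambda>y. norm (v y))"
  defines "\<Phi> \<equiv> \<lambda>x. w x *\<^sub>R U x - integral {a..x} (\<lambda>y. w y *\<^sub>R v y) - integral {a..x} (\<lambda>y. w' y *\<^sub>R U y)"
  shows "norm (\<Phi> q - \<Phi> p) \<le> 2 * L * (q - p) * (m q - m p)"
proof -
  have sub: "{c..d} \<subseteq> {a..b}" if "a \<le> c" "d \<le> b" for c d using that by auto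
  have vi: "v integrable_on {c..d}" if "a \<le> c" "d \<le> b" for c d
    using absolutely_integrable_on_subinterval[OF v sub[OF that]] set_lebesgue_integral_eq_integral(1) by blast
  have nvi: "(\<lambda>y. norm (v y)) integrable_on {c..d}" if "a \<le> c" "d \<le> b" for c d
    using absolutely_integrable_on_subinterval[OF v sub[OF that]] absolutely_integrable_on_def by blast
  have wcont: "continuous_on {a..b} w"
    by (meson DERIV_continuous continuous_at_imp_continuous_on wd differentiable_imp_continuous_within
        continuous_on_eq_continuous_within real_differentiable_def)
  have Ucont: "continuous_on {a..b} U"
    unfolding U_def by (rule indefinite_integral_continuous_1) (use vi in simp)
  have L0: "0 \<le> L" using L[of a] pq by auto
  have wvi: "(\<lambda>y. g y *\<^sub>R v y) absolutely_integrable_on {c..d}"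
    if "a \<le> c" "d \<le> b" "continuous_on {a..b} g" for c d g
  proof (rule absolutely_integrable_bounded_measurable_product[OF bilinear_conv_bounded_bilinear[THEN iffD2, OF bounded_bilinear_scaleR]])
    show "g \<in> borel_measurable (lebesgue_on {c..d})"
      by (rule continuous_imp_measurable_on_sets_lebesgue) (use continuous_on_subset[OF that(3) sub[OF that(1,2)]] in auto)
    show "bounded (g ` {c..d})"
      by (meson compact_Icc compact_continuous_image compact_imp_bounded continuous_on_subset sub that)
    show "v absolutely_integrable_on {c..d}" using absolutely_integrable_on_subinterval[OF v sub[OF that(1,2)]] .
  qed auto
  have wvi': "(\<lambda>y. g y *\<^sub>R v y) integrable_on {c..d}"
    if "a \<le> c" "d \<le> b" "continuous_on {a..b} g" for c d g
    using wvi[OF that] set_lebesgue_integral_eq_integral(1) by blast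
  have wUi: "(\<lambda>y. w' y *\<^sub>R U y) integrable_on {c..d}" if "a \<le> c" "d \<le> b" for c d
    by (rule integrable_continuous_interval)
       (intro continuous_on_scaleR continuous_on_subset[OF wc sub[OF that]] continuous_on_subset[OF Ucont sub[OF that]])
  have vd: "(w has_vector_derivative w' x) (at x within {c..d})" if "a \<le> c" "d \<le> b" "x \<in> {c..d}" for c d x
    using wd[of x] that has_real_derivative_iff_has_vector_derivative has_vector_derivative_within_subset[OF _ sub[OF that(1,2)]]
    by (metis atLeastAtMost_iff order.trans)
  have ftc: "(w' has_integral (w d - w c)) {c..d}" if "a \<le> c" "c \<le> d" "d \<le> b" for c d
    by (rule fundamental_theorem_of_calculus) (use that vd in auto)
  have wlip: "\<bar>w q - w y\<bar> \<le> L * (q - y)" if "p \<le> y" "y \<le> q" for y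
  proof -
    have "norm (w q - w y) \<le> L * (q - y)"
      using has_integral_bound[OF L0, where f=w' and i="w q - w y" and a=y and b=q] ftc[of y q] that pq L
      by (auto simp: box_real content_real)
    then show ?thesis using that by simp
  qed
  have comb: "integral {a..q} g = integral {a..p} g + integral {p..q} g" if "g integrable_on {a..q}" for g :: "real \<Rightarrow> complex"
    using Henstock_Kurzweil_Integration.integral_combine[where a=a and c=p and b=q and f=g] that pq by auto
  have Uq: "U q = U p + integral {p..q} v" unfolding U_def by (rule comb) (use vi pq in auto)
  have mq: "m q = m p + integral {p..q} (\<lambda>y. norm (v y))" unfolding m_def
    using Henstock_Kurzweil_Integration.integral_combine[where a=a and c=p and b=q and f="\<lambda>y. norm (v y)"] nvi[of a q] pq by auto
  have I1: "integral {a..q} (\<lambda>y. w y *\<^sub>R v y) = integral {a..p} (\<lambda>y. w y *\<^sub>R v y) + integral {p..q} (\<lambda>y. w y *\<^sub>R v y)"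
    by (rule comb) (use wvi'[OF _ _ wcont] pq in auto)
  have I2: "integral {a..q} (\<lambda>y. w' y *\<^sub>R U y) = integral {a..p} (\<lambda>y. w' y *\<^sub>R U y) + integral {p..q} (\<lambda>y. w' y *\<^sub>R U y)"
    by (rule comb) (use wUi pq in auto)
  have wpq: "w q - w p = integral {p..q} w'" using ftc[of p q] pq by (simp add: integral_unique)
  have w'i: "w' integrable_on {p..q}" using ftc[of p q] pq by blast
  have A: "(w q - w p) *\<^sub>R U p = integral {p..q} (\<lambda>x. w' x *\<^sub>R U p)"
    by (rule integral_unique[symmetric], rule has_integral_scaleR_left, rule ftc) (use pq in auto)
  have B: "w q *\<^sub>R integral {p..q} v = integral {p..q} (\<lambda>y. w q *\<^sub>R v y)"
    by simp
  have wqvi: "(\<lambda>y. w q *\<^sub>R v y) integrable_on {p..q}" using vi[of p q] pq integrable_cmul by blast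
  have wvpq: "(\<lambda>y. w y *\<^sub>R v y) integrable_on {p..q}" using wvi'[OF _ _ wcont] pq by auto
  have gcont: "continuous_on {a..b} (\<lambda>y. w q - w y)" by (intro continuous_intros wcont)
  have wvpq2: "(\<lambda>y. (w q - w y) *\<^sub>R v y) integrable_on {p..q}" using wvi'[OF _ _ gcont] pq by auto
  have wUpi: "(\<lambda>x. w' x *\<^sub>R U p) integrable_on {p..q}" by (rule integrable_on_scaleR_left[OF w'i])
  have wUpq: "(\<lambda>x. w' x *\<^sub>R U x) integrable_on {p..q}" using wUi pq by auto
  have wUpq2: "(\<lambda>x. w' x *\<^sub>R (U x - U p)) integrable_on {p..q}"
    using integrable_diff[OF wUpq wUpi] by (simp add: scaleR_right_diff_distrib)
  have e1: "integral {p..q} (\<lambda>y. (w q - w y) *\<^sub>R v y) = integral {p..q} (\<lambda>y. w q *\<^sub>R v y) - integral {p..q} (\<lambda>y. w y *\<^sub>R v y)"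
    using integral_diff[OF wqvi wvpq] by (simp add: scaleR_left_diff_distrib)
  have e2: "integral {p..q} (\<lambda>x. w' x *\<^sub>R (U x - U p)) = integral {p..q} (\<lambda>x. w' x *\<^sub>R U x) - integral {p..q} (\<lambda>x. w' x *\<^sub>R U p)"
    using integral_diff[OF wUpq wUpi] by (simp add: scaleR_right_diff_distrib)
  have e3: "w q *\<^sub>R U q - w p *\<^sub>R U p = (w q - w p) *\<^sub>R U p + w q *\<^sub>R integral {p..q} v"
    by (simp add: Uq algebra_simps)
  have E: "\<Phi> q - \<Phi> p = integral {p..q} (\<lambda>y. (w q - w y) *\<^sub>R v y) - integral {p..q} (\<lambda>x. w' x *\<^sub>R (U x - U p))"
  proof -
    have g: "(x1 - x2 - x3) - (x4 - x5 - x6) = (x1 - x4) - (x2 - x5) - (x3 - x6)" for x1 x2 x3 x4 x5 x6 :: complex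
      by (simp add: algebra_simps)
    have "\<Phi> q - \<Phi> p = (w q *\<^sub>R U q - w p *\<^sub>R U p) - integral {p..q} (\<lambda>y. w y *\<^sub>R v y) - integral {p..q} (\<lambda>y. w' y *\<^sub>R U y)"
      unfolding \<Phi>_def g I1 I2 by simp
    also have "\<dots> = integral {p..q} (\<lambda>x. w' x *\<^sub>R U p) + integral {p..q} (\<lambda>y. w q *\<^sub>R v y) - integral {p..q} (\<lambda>y. w y *\<^sub>R v y) - integral {p..q} (\<lambda>y. w' y *\<^sub>R U y)"
      unfolding e3 A B ..
    finally show ?thesis unfolding e1 e2 by simp
  qed
  have nb1: "norm (integral {p..q} (\<lambda>y. (w q - w y) *\<^sub>R v y)) \<le> integral {p..q} (\<lambda>y. (L*(q-p)) * norm (v y))"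
  proof (rule integral_norm_bound_integral[OF wvpq2])
    show "(\<lambda>y. (L*(q-p)) * norm (v y)) integrable_on {p..q}"
      using integrable_cmul[OF nvi[of p q], of "L*(q-p)"] pq by simp
    fix y assume y: "y \<in> {p..q}"
    have "\<bar>w q - w y\<bar> \<le> L * (q - p)" proof -
      have "L * (q - y) \<le> L * (q - p)" using y L0 by (intro mult_left_mono) auto
      then show ?thesis using wlip[of y] y by auto
    qed
    then show "norm ((w q - w y) *\<^sub>R v y) \<le> (L*(q-p)) * norm (v y)"
      by (simp add: mult_right_mono)
  qed
  also have "\<dots> = L*(q-p) * (m q - m p)" using mq integral_mult[OF nvi[of p q], of "L*(q-p)"] pq by simp
  finally have nb1': "norm (integral {p..q} (\<lambda>y. (w q - w y) *\<^sub>R v y)) \<le> L*(q-p) * (m q - m p)" .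
  have Ux: "norm (U x - U p) \<le> m q - m p" if x: "x \<in> {p..q}" for x
  proof -
    have "U x = U p + integral {p..x} v" unfolding U_def
      using Henstock_Kurzweil_Integration.integral_combine[where a=a and c=p and b=x and f=v] vi[of a x] pq x by auto
    then have "norm (U x - U p) = norm (integral {p..x} v)" by simp
    also have "\<dots> \<le> integral {p..x} (\<lambda>y. norm (v y))"
      by (rule integral_norm_bound_integral) (use vi nvi pq x in auto)
    also have "\<dots> \<le> integral {p..q} (\<lambda>y. norm (v y))"
      by (rule integral_subset_le) (use nvi pq x in auto)
    finally show ?thesis using mq by simp
  qed
  have nb2: "norm (integral {p..q} (\<lambda>x. w' x *\<^sub>R (U x - U p))) \<le> integral {p..q} (\<lambda>x. L * (m q - m p))"
  proof (rule integral_norm_bound_integral[OF wUpq2])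
    show "(\<lambda>x. L * (m q - m p)) integrable_on {p..q}" by (rule integrable_continuous_interval) (rule continuous_on_const)
    fix x assume x: "x \<in> {p..q}"
    have "\<bar>w' x\<bar> \<le> L" using L[of x] x pq by auto
    then show "norm (w' x *\<^sub>R (U x - U p)) \<le> L * (m q - m p)"
      using Ux[OF x] by (simp add: mult_mono')
  qed
  also have "\<dots> = L*(q-p) * (m q - m p)" using pq by (simp add: content_real)
  finally have nb2': "norm (integral {p..q} (\<lambda>x. w' x *\<^sub>R (U x - U p))) \<le> L*(q-p) * (m q - m p)" .
  show ?thesis unfolding E using norm_triangle_ineq4[of "integral {p..q} (\<lambda>y. (w q - w y) *\<^sub>R v y)" "integral {p..q} (\<lambda>x. w' x *\<^sub>R (U x - U p))"] nb1' nb2'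
    by linarith
qed

lemma ibp:
  fixes v :: "real \<Rightarrow> complex"
  assumes ab: "a \<le> b"
    and v: "v absolutely_integrable_on {a..b}"
    and wd: "\<And>x. x \<in> {a..b} \<Longrightarrow> (w has_real_derivative w' x) (at x within {a..b})"
    and wc: "continuous_on {a..b} w'"
  shows "integral {a..b} (\<lambda>y. w y *\<^sub>R v y) + integral {a..b} (\<lambda>y. w' y *\<^sub>R integral {a..y} v)
         = w b *\<^sub>R integral {a..b} v"
proof -
  define U where "U \<equiv> \<lambda>x. integral {a..x} v"
  define m where "m \<equiv> \<lambda>x. integral {a..x} (\<lambda>y. norm (v y))"
  define \<Phi> where "\<Phi> \<equiv> \<lambda>x. w x *\<^sub>R U x - integral {a..x} (\<lambda>y. w y *\<^sub>R v y) - integral {a..x} (\<lambda>y. w' y *\<^sub>R U y)"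
  have "bounded (w' ` {a..b})" by (rule compact_imp_bounded[OF compact_continuous_image[OF wc compact_Icc]])
  then obtain L where L: "\<And>x. x \<in> {a..b} \<Longrightarrow> \<bar>w' x\<bar> \<le> L" unfolding bounded_iff by (metis image_eqI real_norm_def)
  have loc: "norm (\<Phi> q - \<Phi> p) \<le> 2 * L * (q - p) * (m q - m p)" if "a \<le> p" "p \<le> q" "q \<le> b" for p q
    unfolding \<Phi>_def m_def U_def by (rule ibp_local[OF that v wd wc L])
  have \<Phi>a: "\<Phi> a = 0" unfolding \<Phi>_def U_def by simp
  have bound: "norm (\<Phi> b) \<le> 2 * L * ((b - a) / real n) * m b" if n: "n > 0" for n :: nat
  proof -
    define h where "h = (b - a) / real n"
    have h0: "0 \<le> h" using ab n unfolding h_def by auto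
    have nh: "a + real n * h = b" using n unfolding h_def by simp
    have "norm (\<Phi> (a + real k * h)) \<le> 2 * L * h * m (a + real k * h)" if "k \<le> n" for k
      using that
    proof (induction k)
      case 0 then show ?case using \<Phi>a by (simp add: m_def)
    next
      case (Suc k)
      have p1: "a \<le> a + real k * h" using h0 by simp
      have p2: "a + real k * h \<le> a + real (Suc k) * h" using h0 by (simp add: algebra_simps)
      have p3: "a + real (Suc k) * h \<le> b"
      proof -
        have "real (Suc k) * h \<le> real n * h" using Suc.prems h0 by (intro mult_right_mono) auto
        then show ?thesis using nh by linarith
      qed
      have "norm (\<Phi> (a + real (Suc k) * h)) \<le> norm (\<Phi> (a + real k * h)) + norm (\<Phi> (a + real (Suc k) * h) - \<Phi> (a + real k * h))"
        by (metis norm_triangle_sub)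
      also have "\<dots> \<le> 2 * L * h * m (a + real k * h) + 2 * L * h * (m (a + real (Suc k) * h) - m (a + real k * h))"
        using Suc.IH Suc.prems loc[OF p1 p2 p3] by (simp add: algebra_simps)
      finally show ?case by (simp add: algebra_simps)
    qed
    from this[of n] show ?thesis using nh unfolding h_def by simp
  qed
  have "\<Phi> b = 0"
  proof (rule ccontr)
    assume "\<Phi> b \<noteq> 0"
    then have pos: "norm (\<Phi> b) > 0" by simp
    obtain n :: nat where n: "\<bar>2 * L * (b - a) * m b\<bar> / norm (\<Phi> b) < real n" using reals_Archimedean2 by blast
    then have n0: "n > 0" using pos by (metis gr0I less_le_not_le of_nat_0 divide_nonneg_pos abs_ge_zero)
    have "\<bar>2 * L * (b - a) * m b\<bar> < real n * norm (\<Phi> b)" using n pos by (simp add: field_simps)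
    moreover have "norm (\<Phi> b) * real n \<le> 2 * L * (b - a) * m b"
      using bound[OF n0] n0 by (simp add: field_simps)
    ultimately show False by (simp add: mult.commute)
  qed
  then show ?thesis unfolding \<Phi>_def U_def by (simp add: algebra_simps)
qed



lemma exp_taylor_lb:
  fixes x :: real assumes "0 \<le> x"
  shows "(\<Sum>k<n. x^k / fact k) \<le> exp x"
proof -
  have S: "(\<lambda>k. x^k / fact k) sums exp x" using exp_converges[of x] by (simp add: divide_inverse mult.commute)
  show ?thesis
    using sum_le_suminf[OF sums_summable[OF S], of "{..<n}"] sums_unique[OF S] assms by simp
qed

lemma exp_2pi: "400 \<le> exp (2*pi)"
proof -
  have "(\<Sum>k<9. (6.28::real)^k / fact k) \<le> exp 6.28" by (rule exp_taylor_lb) simp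
  moreover have "(400::real) \<le> (\<Sum>k<9. (6.28::real)^k / fact k)"
    by (simp add: eval_nat_numeral fact_numeral)
  moreover have "exp (6.28::real) \<le> exp (2*pi)" using pi_approx by simp
  ultimately show ?thesis by linarith
qed

lemma cube_le_exp:
  fixes s :: real assumes "1 \<le> s"
  shows "s^3 \<le> exp (2*pi*(s-1))"
proof -
  define d where "d = s - 1"
  have d0: "0 \<le> d" using assms d_def by simp
  have T: "(\<Sum>k<4. (2*pi*d)^k / fact k) \<le> exp (2*pi*d)" by (rule exp_taylor_lb) (use d0 in simp)
  have T2: "(\<Sum>k<4. (2*pi*d)^k / fact k) = 1 + 2*pi*d + 2*pi^2*d^2 + (4/3)*pi^3*d^3"
    by (simp add: eval_nat_numeral fact_numeral power_mult_distrib field_simps)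
  have c1: "3*d \<le> 2*pi*d" using d0 pi_gt3 by (intro mult_right_mono) auto
  have "3*3 \<le> pi*pi" using pi_gt3 by (intro mult_mono) auto
  then have "3 \<le> 2*pi^2" by (simp add: power2_eq_square)
  then have c2: "3*d^2 \<le> 2*pi^2*d^2" using d0 by (intro mult_right_mono) auto
  have "1 \<le> pi^3" using pi_gt3 by (intro one_le_power) auto
  then have "1 \<le> (4/3)*pi^3" by simp
  then have c3: "1 * d^3 \<le> (4/3)*pi^3*d^3" using d0 by (intro mult_right_mono) auto
  have "s^3 = 1 + 3*d + 3*d^2 + d^3" unfolding d_def by (simp add: algebra_simps power2_eq_square power3_eq_cube)
  then show ?thesis using T T2 c1 c2 c3 d_def by simp
qed



lemma num_core:
  fixes s t pp :: real
  assumes s1: "1 \<le> s" and t0: "0 < t" and t1: "t \<le> 1/399" and st: "s^3 * t \<le> (1+t)/400"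
    and p1: "3.14159 \<le> pp" and p2: "pp \<le> 3.1416"
  defines "a \<equiv> s*(1+2*t)/4" and "b \<equiv> pp * s^2 * t * (1+t)" and "k \<equiv> 1/(2*pp)"
  shows "b < a" "0 < a + b - k" "(sqrt a + sqrt (a + b - k))^2 < s - 1/pp"
proof -
  have s2t: "s^2 * t \<le> s^3 * t" using s1 t0 by (intro mult_right_mono) (auto simp: power_increasing)
  have s2t': "s^2 * t \<le> (1+t)/400" using s2t st by linarith
  have b1: "b \<le> pp * ((1+t)/400) * (1+t)"
  proof -
    have "b = pp * (s^2 * t) * (1+t)" unfolding b_def by simp
    also have "\<dots> \<le> pp * ((1+t)/400) * (1+t)" using s2t' p1 t0
      by (intro mult_right_mono mult_left_mono) auto
    finally show ?thesis .
  qed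
  have b2: "b \<le> 1/100" using b1 t1 t0 p2
  proof -
    have "pp * ((1+t)/400) * (1+t) \<le> 3.1416 * ((1+1/399)/400) * (1+1/399)"
      using p1 p2 t0 t1 by (intro mult_mono) (auto simp: divide_right_mono)
    then show ?thesis using b1 by simp
  qed
  have b0: "0 \<le> b" unfolding b_def using t0 p1 by simp
  have st0: "0 \<le> s*(2*t)" using s1 t0 by simp
  have a1: "1/4 \<le> a"
  proof -
    have "a = s/4 + s*(2*t)/4" unfolding a_def by (simp add: algebra_simps)
    then show ?thesis using st0 s1 by linarith
  qed
  show "b < a" using a1 b2 by simp
  have k1: "k \<le> 0.16" unfolding k_def using p1 by (simp add: field_simps)
  have k0: "0 < k" unfolding k_def using p1 by simp
  show Q0: "0 < a + b - k" using a1 b0 k1 by simp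
  define XX where "XX = s*(1+2*t)/2"
  define d where "d = s*(2*t) + b + k"
  define R where "R = s - 1/pp - a - (a + b - k)"
  have RX: "R = XX - d" unfolding R_def XX_def d_def a_def k_def using p1 by (simp add: field_simps)
  have iden: "R^2 - 4*a*(a+b-k) = d^2 - XX*(4*b + 4 * s * t)"
  proof -
    have aX: "a = XX/2" unfolding a_def XX_def by simp
    show ?thesis unfolding RX aX d_def by (simp add: algebra_simps power2_eq_square)
  qed
  have main: "XX*(4*b + 4 * s * t) < d^2"
  proof -
    have "XX*(4*b + 4 * s * t) = (1+2*t) * (2*pp*(s^3*t)*(1+t) + 2*(s^2*t))"
      unfolding XX_def b_def by (simp add: field_simps power2_eq_square power3_eq_cube)
    also have "\<dots> \<le> (1+2*t) * (2*pp*((1+t)/400)*(1+t) + 2*((1+t)/400))"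
      using st s2t' t0 p1 by (intro mult_left_mono add_mono mult_right_mono) auto
    also have "\<dots> \<le> (1+2/399) * (2*3.1416*((1+1/399)/400)*(1+1/399) + 2*((1+1/399)/400))"
      using t0 t1 p1 p2 by (intro mult_mono add_mono) (auto simp: divide_right_mono)
    also have "\<dots> < k^2"
    proof -
      have "k \<ge> 1/(2*3.1416)" unfolding k_def using p1 p2 by (simp add: field_simps)
      then have "k^2 \<ge> (1/(2*3.1416))^2" using k0 by (intro power_mono) auto
      then show ?thesis by (simp add: power2_eq_square)
    qed
    also have "k^2 \<le> d^2" unfolding d_def using k0 b0 s1 t0 by (intro power_mono) auto
    finally show ?thesis .
  qed
  have R0: "0 < R"
  proof -
    have "d \<le> 2/399 * s + 1/100 + 0.16" 
    proof -
      have "s * t \<le> s * (1/399)" using t1 s1 by (intro mult_left_mono) auto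
      then show ?thesis unfolding d_def using b2 k1 by simp
    qed
    moreover have "XX \<ge> s/2"
    proof -
      have "XX = s/2 + s*(2*t)/2" unfolding XX_def by (simp add: algebra_simps)
      then show ?thesis using st0 by linarith
    qed
    ultimately show ?thesis unfolding RX using s1 by simp
  qed
  have "4*a*(a+b-k) < R^2" using iden main by simp
  then have "sqrt (4*a*(a+b-k)) < R" using R0 by (metis real_sqrt_less_iff real_sqrt_abs abs_of_pos power2_eq_square real_sqrt_mult_self)
  moreover have "sqrt (4*a*(a+b-k)) = 2 * sqrt a * sqrt (a+b-k)" by (simp add: real_sqrt_mult)
  moreover have "(sqrt a + sqrt (a + b - k))^2 = a + (a+b-k) + 2 * sqrt a * sqrt (a+b-k)"
    using a1 Q0 by (simp add: power2_eq_square algebra_simps)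
  ultimately show "(sqrt a + sqrt (a + b - k))^2 < s - 1/pp" unfolding R_def by linarith
qed


lemma amgm: fixes x y l :: real assumes "0 < l"
  shows "x * y \<le> l/2 * x^2 + 1/(2*l) * y^2"
proof -
  have "0 \<le> (l*x - y)^2" by simp
  then have "2*l*(x*y) \<le> l^2*x^2 + y^2" by (simp add: power2_eq_square algebra_simps)
  moreover have "2*l*(l/2 * x^2 + 1/(2*l) * y^2) = l^2*x^2 + y^2" using assms by (simp add: field_simps power2_eq_square)
  ultimately have "2*l*(x*y) \<le> 2*l*(l/2 * x^2 + 1/(2*l) * y^2)" by simp
  then show ?thesis using assms by (simp add: mult_le_cancel_left_pos)
qed

lemma key:
  fixes u v :: "real \<Rightarrow> complex" and w w' :: "real \<Rightarrow> real"
  assumes H: "H1per u v" and m0: "integral {0..2*pi} u = 0"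
   and n1: "integral {0..2*pi} (\<lambda>x. (cmod (u x))^2) = 1"
   and nD: "integral {0..2*pi} (\<lambda>x. (cmod (v x))^2) = D"
   and wd: "\<And>x. x \<in> {0..2*pi} \<Longrightarrow> (w has_real_derivative w' x) (at x within {0..2*pi})"
   and wc: "continuous_on {0..2*pi} w'"
   and wj: "w (2*pi) - w 0 = 1"
   and lam: "l > 0" and mu: "\<mu> > 0"
  shows "cmod (u 0) \<le> (l*D + integral {0..2*pi} (\<lambda>x. (w x)^2)/l)/2
                      + (\<mu> + integral {0..2*pi} (\<lambda>x. (w' x - 1/(2*pi))^2)/\<mu>)/2"
proof -
  define c where "c = 1/(2*pi)"
  have per: "\<And>x. u (x + 2*pi) = u x" and vai: "v absolutely_integrable_on {0..2*pi}"
    and vsq: "(\<lambda>x. (cmod (v x))^2) integrable_on {0..2*pi}"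
    and rep: "\<And>x. x \<in> {0..2*pi} \<Longrightarrow> u x = u 0 + integral {0..x} v"
    using H unfolding H1per_def by blast+
  have u2: "u (2*pi) = u 0" using per[of 0] by simp
  have vi: "v integrable_on {0..2*pi}" using vai set_lebesgue_integral_eq_integral(1) by blast
  have iv: "integral {0..2*pi} v = 0" using rep[of "2*pi"] u2 by simp
  have ucont: "continuous_on {0..2*pi} u"
  proof -
    have "continuous_on {0..2*pi} (\<lambda>x. u 0 + integral {0..x} v)"
      by (intro continuous_intros indefinite_integral_continuous_1 vi)
    then show ?thesis by (rule continuous_on_eq) (metis rep)
  qed
  have wcont: "continuous_on {0..2*pi} w"
    by (meson DERIV_continuous continuous_at_imp_continuous_on wd differentiable_imp_continuous_within
        continuous_on_eq_continuous_within real_differentiable_def)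
  have IBP: "integral {0..2*pi} (\<lambda>y. w y *\<^sub>R v y) + integral {0..2*pi} (\<lambda>y. w' y *\<^sub>R integral {0..y} v)
         = w (2*pi) *\<^sub>R integral {0..2*pi} v"
    by (rule ibp[OF _ vai wd wc]) auto
  have ftc: "(w' has_integral (w (2*pi) - w 0)) {0..2*pi}"
    by (rule fundamental_theorem_of_calculus) (use wd has_real_derivative_iff_has_vector_derivative in auto)
  have iw': "integral {0..2*pi} w' = 1" using ftc wj by (simp add: integral_unique)
  have w'i: "w' integrable_on {0..2*pi}" using ftc by blast
  have w'ui: "(\<lambda>y. w' y *\<^sub>R u y) integrable_on {0..2*pi}"
    by (intro integrable_continuous_interval continuous_intros wc ucont)
  have w'u0i: "(\<lambda>y. w' y *\<^sub>R u 0) integrable_on {0..2*pi}" by (rule integrable_on_scaleR_left[OF w'i])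
  have "integral {0..2*pi} (\<lambda>y. w' y *\<^sub>R integral {0..y} v) = integral {0..2*pi} (\<lambda>y. w' y *\<^sub>R u y - w' y *\<^sub>R u 0)"
  proof (rule integral_cong)
    fix x assume x: "x \<in> {0..2*pi}"
    have "integral {0..x} v = u x - u 0" by (simp add: rep[OF x])
    then show "w' x *\<^sub>R integral {0..x} v = w' x *\<^sub>R u x - w' x *\<^sub>R u 0" by (simp add: scaleR_right_diff_distrib)
  qed
  also have "\<dots> = integral {0..2*pi} (\<lambda>y. w' y *\<^sub>R u y) - u 0"
    using integral_diff[OF w'ui w'u0i] integral_unique[OF has_integral_scaleR_left[OF ftc, of "u 0"]] wj by simp
  finally have int2: "integral {0..2*pi} (\<lambda>y. w' y *\<^sub>R integral {0..y} v) = integral {0..2*pi} (\<lambda>y. w' y *\<^sub>R u y) - u 0" .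
  have g: "a + (b - c) = 0 \<Longrightarrow> c = a + b" for a b c :: complex by (metis add_diff_eq eq_iff_diff_eq_0)
  have u0eq: "u 0 = integral {0..2*pi} (\<lambda>y. w y *\<^sub>R v y) + integral {0..2*pi} (\<lambda>y. w' y *\<^sub>R u y)"
    using IBP iv int2 by (intro g) simp
  have cmi: "(\<lambda>x. k * f x) integrable_on S" if "f integrable_on S" for f :: "real \<Rightarrow> real" and k S
    using integrable_cmul[OF that, of k] by simp
  have wvai: "(\<lambda>y. w y *\<^sub>R v y) absolutely_integrable_on {0..2*pi}"
  proof (rule absolutely_integrable_bounded_measurable_product[OF bilinear_conv_bounded_bilinear[THEN iffD2, OF bounded_bilinear_scaleR]])
    show "w \<in> borel_measurable (lebesgue_on {0..2*pi})"
      by (rule continuous_imp_measurable_on_sets_lebesgue[OF wcont]) auto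
    show "bounded (w ` {0..2*pi})"
      by (meson compact_Icc compact_continuous_image compact_imp_bounded wcont)
  qed (use vai in auto)
  have wvi: "(\<lambda>y. w y *\<^sub>R v y) integrable_on {0..2*pi}" using wvai set_lebesgue_integral_eq_integral(1) by blast
  have nwvi: "(\<lambda>y. \<bar>w y\<bar> * cmod (v y)) integrable_on {0..2*pi}"
    using wvai unfolding absolutely_integrable_on_def by simp
  have gucont: "continuous_on {0..2*pi} (\<lambda>y. (w' y - c) *\<^sub>R u y)" by (intro continuous_intros wc ucont)
  have gui: "(\<lambda>y. (w' y - c) *\<^sub>R u y) integrable_on {0..2*pi}" by (rule integrable_continuous_interval[OF gucont])
  have ngui: "(\<lambda>y. \<bar>w' y - c\<bar> * cmod (u y)) integrable_on {0..2*pi}"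
    using absolutely_integrable_continuous_real[OF gucont] unfolding absolutely_integrable_on_def by simp
  have ui: "u integrable_on {0..2*pi}" by (rule integrable_continuous_interval[OF ucont])
  have eqc: "integral {0..2*pi} (\<lambda>y. (w' y - c) *\<^sub>R u y) = integral {0..2*pi} (\<lambda>y. w' y *\<^sub>R u y)"
  proof -
    have "integral {0..2*pi} (\<lambda>y. (w' y - c) *\<^sub>R u y) = integral {0..2*pi} (\<lambda>y. w' y *\<^sub>R u y - c *\<^sub>R u y)"
      by (simp add: scaleR_left_diff_distrib)
    also have "\<dots> = integral {0..2*pi} (\<lambda>y. w' y *\<^sub>R u y) - c *\<^sub>R integral {0..2*pi} u"
      using integral_diff[OF w'ui integrable_cmul[OF ui, of c]] by simp
    finally show ?thesis using m0 by simp
  qed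
  have w2i: "(\<lambda>x. (w x)^2) integrable_on {0..2*pi}" by (intro integrable_continuous_interval continuous_intros wcont)
  have g2i: "(\<lambda>x. (w' x - c)^2) integrable_on {0..2*pi}" by (intro integrable_continuous_interval continuous_intros wc)
  have u2i: "(\<lambda>x. (cmod (u x))^2) integrable_on {0..2*pi}" by (intro integrable_continuous_interval continuous_intros ucont)
  have b1: "norm (integral {0..2*pi} (\<lambda>y. w y *\<^sub>R v y)) \<le> (l*D + integral {0..2*pi} (\<lambda>x. (w x)^2)/l)/2"
  proof -
    have "norm (integral {0..2*pi} (\<lambda>y. w y *\<^sub>R v y)) \<le> integral {0..2*pi} (\<lambda>y. \<bar>w y\<bar> * cmod (v y))"
      by (rule integral_norm_bound_integral[OF wvi nwvi]) simp
    also have "\<dots> \<le> integral {0..2*pi} (\<lambda>y. l/2 * (cmod (v y))^2 + 1/(2*l) * (w y)^2)"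
    proof (rule integral_le[OF nwvi])
      show "(\<lambda>y. l/2 * (cmod (v y))^2 + 1/(2*l) * (w y)^2) integrable_on {0..2*pi}"
        by (intro integrable_add cmi vsq w2i)
      fix y show "\<bar>w y\<bar> * cmod (v y) \<le> l/2 * (cmod (v y))^2 + 1/(2*l) * (w y)^2"
        using amgm[OF lam, of "cmod (v y)" "\<bar>w y\<bar>"] by (simp add: mult.commute)
    qed
    also have "\<dots> = l/2 * D + 1/(2*l) * integral {0..2*pi} (\<lambda>x. (w x)^2)"
      using integral_add[OF cmi[OF vsq, of "l/2"] cmi[OF w2i, of "1/(2*l)"]] nD
        integral_mult[OF vsq, of "l/2"] integral_mult[OF w2i, of "1/(2*l)"] by simp
    also have "\<dots> = (l*D + integral {0..2*pi} (\<lambda>x. (w x)^2)/l)/2" by (simp add: field_simps)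
    finally show ?thesis .
  qed
  have b2: "norm (integral {0..2*pi} (\<lambda>y. (w' y - c) *\<^sub>R u y)) \<le> (\<mu> + integral {0..2*pi} (\<lambda>x. (w' x - c)^2)/\<mu>)/2"
  proof -
    have "norm (integral {0..2*pi} (\<lambda>y. (w' y - c) *\<^sub>R u y)) \<le> integral {0..2*pi} (\<lambda>y. \<bar>w' y - c\<bar> * cmod (u y))"
      by (rule integral_norm_bound_integral[OF gui ngui]) simp
    also have "\<dots> \<le> integral {0..2*pi} (\<lambda>y. \<mu>/2 * (cmod (u y))^2 + 1/(2*\<mu>) * (w' y - c)^2)"
    proof (rule integral_le[OF ngui])
      show "(\<lambda>y. \<mu>/2 * (cmod (u y))^2 + 1/(2*\<mu>) * (w' y - c)^2) integrable_on {0..2*pi}"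
        by (intro integrable_add cmi u2i g2i)
      fix y show "\<bar>w' y - c\<bar> * cmod (u y) \<le> \<mu>/2 * (cmod (u y))^2 + 1/(2*\<mu>) * (w' y - c)^2"
        using amgm[OF mu, of "cmod (u y)" "\<bar>w' y - c\<bar>"] by (simp add: mult.commute)
    qed
    also have "\<dots> = \<mu>/2 * 1 + 1/(2*\<mu>) * integral {0..2*pi} (\<lambda>x. (w' x - c)^2)"
      using integral_add[OF cmi[OF u2i, of "\<mu>/2"] cmi[OF g2i, of "1/(2*\<mu>)"]] n1
        integral_mult[OF u2i, of "\<mu>/2"] integral_mult[OF g2i, of "1/(2*\<mu>)"] by simp
    also have "\<dots> = (\<mu> + integral {0..2*pi} (\<lambda>x. (w' x - c)^2)/\<mu>)/2" by (simp add: field_simps)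
    finally show ?thesis .
  qed
  have "cmod (u 0) \<le> norm (integral {0..2*pi} (\<lambda>y. w y *\<^sub>R v y)) + norm (integral {0..2*pi} (\<lambda>y. (w' y - c) *\<^sub>R u y))"
    unfolding u0eq eqc by (rule norm_triangle_ineq)
  then show ?thesis using b1 b2 unfolding c_def by linarith
qed


lemma uniform_bound:
  fixes D :: real assumes D1: "D \<ge> 1"
  shows "\<exists>B. B < sqrt D - 1/pi \<and> (\<forall>u v. H1per u v \<and> integral {0..2*pi} u = 0
              \<and> integral {0..2*pi} (\<lambda>x. (cmod (u x))^2) = 1
              \<and> integral {0..2*pi} (\<lambda>x. (cmod (v x))^2) = D \<longrightarrow> (cmod (u 0))^2 \<le> B)"
proof -
  define s where "s = sqrt D"
  have s1: "1 \<le> s" unfolding s_def using D1 by simp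
  have s0: "0 < s" using s1 by simp
  have Ds: "D = s^2" unfolding s_def using D1 by simp
  define E where "E = exp (2*pi* s)"
  have E400: "400 * s^3 \<le> E"
  proof -
    have "E = exp (2*pi) * exp (2*pi*(s-1))" unfolding E_def by (simp add: exp_add[symmetric] algebra_simps)
    moreover have "400 * s^3 \<le> exp (2*pi) * exp (2*pi*(s-1))"
      using exp_2pi cube_le_exp[OF s1] s0 by (intro mult_mono) auto
    ultimately show ?thesis by simp
  qed
  have s3: "1 \<le> s^3" using s1 by (simp add: one_le_power)
  have E4: "400 \<le> E" using E400 s3 by linarith
  have E1: "E - 1 > 0" using E4 by simp
  have Ene: "E \<noteq> 1" "E - 1 \<noteq> 0" "1 - E \<noteq> 0" using E1 by auto
  define t where "t = 1/(E-1)"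
  have t0: "0 < t" unfolding t_def using E1 by simp
  have t1: "t \<le> 1/399" unfolding t_def using E4 by (simp add: field_simps)
  have Et: "E * t = 1 + t" unfolding t_def using E1 by (simp add: field_simps)
  have st: "s^3 * t \<le> (1+t)/400"
  proof -
    have "s^3 * t \<le> (E/400) * t" using E400 t0 by (intro mult_right_mono) auto
    then show ?thesis using Et by simp
  qed
  have pp1: "3.14159 \<le> pi" and pp2: "pi \<le> 3.1416" using pi_approx by auto
  define a where "a \<equiv> s*(1+2*t)/4"
  define b where "b \<equiv> pi * s^2 * t * (1+t)"
  define k where "k \<equiv> 1/(2*pi)"
  note NC = num_core[OF s1 t0 t1 st pp1 pp2, folded a_def b_def k_def]
  define C where "C = 1/(2*(E-1))"
  have C2: "C * (2*(E-1)) = 1" unfolding C_def using Ene by simp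
  define h where "h = 1/(2* s)"
  have h2: "h * (2* s) = 1" unfolding h_def using s0 by simp
  define w where "w = (\<lambda>x. C * (exp (s * x) - E * exp (-(s * x))))"
  define w' where "w' = (\<lambda>x. C * (s * (exp (s * x) + E * exp (-(s * x)))))"
  have wd: "(w has_real_derivative w' x) (at x within {0..2*pi})" for x
    unfolding w_def w'_def by (auto intro!: derivative_eq_intros simp: algebra_simps)
  have wc: "continuous_on {0..2*pi} w'" unfolding w'_def by (intro continuous_intros)
  have eE: "exp (s * (2*pi)) = E" unfolding E_def by (simp add: mult.commute)
  have eE': "exp (-(s * (2*pi))) = 1/E" using eE by (simp add: exp_minus field_simps)
  have wj: "w (2*pi) - w 0 = 1" unfolding w_def eE eE' using Ene C2 E4 by (simp add: field_simps)
  have e2: "exp (s*x)^2 = exp (2* s*x)" "exp (-(s*x))^2 = exp (-(2* s*x))" "exp (s*x) * exp (-(s*x)) = 1" for x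
    by (simp_all add: power2_eq_square exp_add[symmetric] exp_minus_inverse)
  have wsq: "(w x)^2 = C^2 * (exp (2* s*x) - 2*E + E^2 * exp (-(2* s*x)))" for x
  proof -
    have "(exp (s * x) - E * exp (-(s * x)))^2 = exp (s*x)^2 - 2*E*(exp (s*x) * exp (-(s*x))) + E^2 * exp (-(s*x))^2"
      by (simp add: power2_eq_square algebra_simps)
    then show ?thesis unfolding w_def e2 by (simp add: power_mult_distrib)
  qed
  define G where "G = (\<lambda>x. C^2 * (h * exp (2* s*x) - 2*E*x - E^2 * h * exp (-(2* s*x))))"
  have Gd: "(G has_real_derivative C^2 * (exp (2* s*x) - 2*E + E^2 * exp (-(2* s*x)))) (at x within {0..2*pi})" for x
  proof -
    have "(G has_real_derivative C^2 * ((h * (2* s)) * exp (2* s*x) - 2*E + E^2 * (h * (2* s)) * exp (-(2* s*x)))) (at x within {0..2*pi})"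
      unfolding G_def by (auto intro!: derivative_eq_intros simp: algebra_simps)
    then show ?thesis unfolding h2 by simp
  qed
  define P where "P = integral {0..2*pi} (\<lambda>x. (w x)^2)"
  define Q where "Q = integral {0..2*pi} (\<lambda>x. (w' x - 1/(2*pi))^2)"
  have eE2: "exp (2* s*(2*pi)) = E^2" "exp (-(2* s*(2*pi))) = 1/E^2"
    using eE eE' e2[of "2*pi"] by (auto simp: power_one_over)
  have ftc: "(f' has_integral (f (2*pi) - f 0)) {0..2*pi}"
    if "\<And>x. (f has_real_derivative f' x) (at x within {0..2*pi})" for f f' :: "real \<Rightarrow> real"
    by (rule fundamental_theorem_of_calculus) (use that has_real_derivative_iff_has_vector_derivative in auto)
  have Pv: "P = G (2*pi) - G 0"
  proof -
    have "((\<lambda>x. C^2 * (exp (2* s*x) - 2*E + E^2 * exp (-(2* s*x)))) has_integral (G (2*pi) - G 0)) {0..2*pi}"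
      by (rule ftc[OF Gd])
    then have "integral {0..2*pi} (\<lambda>x. C^2 * (exp (2* s*x) - 2*E + E^2 * exp (-(2* s*x)))) = G (2*pi) - G 0"
      by (rule integral_unique)
    then show ?thesis unfolding P_def wsq .
  qed
  have Ct: "C = t/2" unfolding C_def t_def by simp
  have Ett: "E = (1+t)/t" using Et t0 by (simp add: field_simps)
  have tE1: "t*(E-1) = 1" unfolding t_def using Ene by simp
  have CE1: "C^2*(E^2-1) = (1+2*t)/4"
  proof -
    have "C^2*(E^2-1) = (t*(E-1))*(E*t + t)/4" unfolding Ct by (simp add: power2_eq_square algebra_simps)
    then show ?thesis unfolding tE1 Et by simp
  qed
  have CE2: "C^2*E = t*(1+t)/4"
  proof -
    have "C^2*E = t*(E*t)/4" unfolding Ct by (simp add: power2_eq_square algebra_simps)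
    then show ?thesis unfolding Et .
  qed
  have X1: "s^2*C^2*(2*h*(E^2-1)) = a" unfolding a_def
  proof -
    have "s^2*C^2*(2*h*(E^2-1)) = (s^2*(2*h))*(C^2*(E^2-1))" by (simp add: algebra_simps)
    also have "s^2*(2*h) = s" unfolding h_def using s0 by (simp add: power2_eq_square)
    finally show "s^2*C^2*(2*h*(E^2-1)) = s*(1+2*t)/4" using CE1 by simp
  qed
  have X2: "s^2*C^2*(4*pi*E) = b" unfolding b_def
  proof -
    have "s^2*C^2*(4*pi*E) = 4*pi* s^2*(C^2*E)" by (simp add: algebra_simps)
    then show "s^2*C^2*(4*pi*E) = pi * s^2 * t * (1+t)" using CE2 by simp
  qed
  have GG: "G (2*pi) - G 0 = C^2*(2*h*(E^2-1)) - C^2*(4*pi*E)"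
    unfolding G_def eE2 using E4 by (simp add: field_simps power2_eq_square)
  have sP: "s^2 * P = a - b"
    unfolding Pv GG using X1 X2 by (simp add: algebra_simps)
  have w'sq: "(w' x - k)^2 = C^2 * s^2 * (exp (2* s*x) + 2*E + E^2 * exp (-(2* s*x))) - 2*k*w' x + k^2" for x
  proof -
    have "(exp (s * x) + E * exp (-(s * x)))^2 = exp (s*x)^2 + 2*E*(exp (s*x) * exp (-(s*x))) + E^2 * exp (-(s*x))^2"
      by (simp add: power2_eq_square algebra_simps)
    then have "(w' x)^2 = C^2 * s^2 * (exp (2* s*x) + 2*E + E^2 * exp (-(2* s*x)))"
      unfolding w'_def e2 by (simp add: power_mult_distrib)
    then show ?thesis by (simp add: power2_eq_square algebra_simps)
  qed
  have wd2: "(w has_real_derivative w' x) (at x within {0..pi*2})" for x using wd[of x] by (simp add: mult.commute)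
  define H where "H = (\<lambda>x. C^2 * s^2 * (h * exp (2* s*x) + 2*E*x - E^2 * h * exp (-(2* s*x))) - 2*k*w x + k^2 * x)"
  have Hd: "(H has_real_derivative (w' x - k)^2) (at x within {0..2*pi})" for x
  proof -
    have "(H has_real_derivative C^2 * s^2 * ((h * (2* s)) * exp (2* s*x) + 2*E + E^2 * (h * (2* s)) * exp (-(2* s*x))) - 2*k*w' x + k^2) (at x within {0..2*pi})"
      unfolding H_def by (auto intro!: derivative_eq_intros wd wd2 simp: algebra_simps)
    then show ?thesis unfolding h2 w'sq by simp
  qed
  have Qv: "Q = a + b - k"
  proof -
    have "Q = H (2*pi) - H 0" unfolding Q_def k_def[symmetric] using ftc[OF Hd] by (rule integral_unique)
    also have "\<dots> = C^2 * s^2 * (h * E^2 + 2*E*(2*pi) - E^2 * h * (1/E^2)) - C^2 * s^2 * (h - E^2 * h) - 2*k*(w (2*pi) - w 0) + k^2 * (2*pi)"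
      unfolding H_def eE2 by (simp add: algebra_simps)
    also have "\<dots> = a + b - k"
    proof -
      have "C^2 * s^2 * (h * E^2 + 2*E*(2*pi) - E^2 * h * (1/E^2)) - C^2 * s^2 * (h - E^2 * h)
            = s^2*C^2*(2*h*(E^2-1)) + s^2*C^2*(4*pi*E)" using E4 by (simp add: field_simps power2_eq_square)
      moreover have "- 2*k*(1::real) + k^2 * (2*pi) = - k" unfolding k_def by (simp add: field_simps power2_eq_square)
      ultimately show ?thesis unfolding wj X1 X2 by simp
    qed
    finally show ?thesis .
  qed
  have b0': "0 \<le> b" unfolding b_def using t0 by simp
  have Pp: "0 < P"
  proof -
    have "0 < s^2 * P" using sP NC(1) by simp
    then show ?thesis using s0 by (simp add: zero_less_mult_iff)
  qed
  have Qp: "0 < Q" using Qv NC(2) by simp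
  have sqP: "s * sqrt P \<le> sqrt a"
  proof -
    have "s * sqrt P = sqrt (s^2 * P)" using s0 by (simp add: real_sqrt_mult)
    also have "\<dots> = sqrt (a - b)" using sP by simp
    also have "\<dots> \<le> sqrt a" using b0' by simp
    finally show ?thesis .
  qed
  show ?thesis
  proof (intro exI conjI allI impI)
    show "(sqrt a + sqrt Q)^2 < sqrt D - 1/pi" using NC(3) Qv s_def by simp
    fix u v :: "real \<Rightarrow> complex"
    assume A: "H1per u v \<and> integral {0..2*pi} u = 0 \<and> integral {0..2*pi} (\<lambda>x. (cmod (u x))^2) = 1
              \<and> integral {0..2*pi} (\<lambda>x. (cmod (v x))^2) = D"
    have lp: "0 < sqrt P / s" using Pp s0 by simp
    have mp: "0 < sqrt Q" using Qp by simp
    have "cmod (u 0) \<le> ((sqrt P / s)*D + P/(sqrt P / s))/2 + (sqrt Q + Q/sqrt Q)/2"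
      using key[of u v D w w', OF _ _ _ _ wd wc wj lp mp] A unfolding P_def Q_def by blast
    also have "\<dots> = s * sqrt P + sqrt Q"
    proof -
      have "(sqrt P / s)*D = s * sqrt P" unfolding Ds using s0 by (simp add: power2_eq_square)
      moreover have "P/(sqrt P / s) = s * (P / sqrt P)" by simp
      moreover have "P / sqrt P = sqrt P" using Pp by (simp add: real_div_sqrt)
      moreover have "Q/sqrt Q = sqrt Q" using Qp by (simp add: real_div_sqrt)
      ultimately show ?thesis by simp
    qed
    also have "\<dots> \<le> sqrt a + sqrt Q" using sqP by simp
    finally have "cmod (u 0) \<le> sqrt a + sqrt Q" .
    then show "(cmod (u 0))^2 \<le> (sqrt a + sqrt Q)^2" by (intro power_mono) auto
  qed
qed


lemma sin_mult_2pi: "sin (real m * (2*pi)) = 0" "cos (real m * (2*pi)) = 1"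
proof -
  have e: "real m * (2*pi) = 2 * real m * pi" by simp
  show "sin (real m * (2*pi)) = 0" "cos (real m * (2*pi)) = 1" by (simp_all only: e sin_2npi cos_2npi)
qed

lemma trig_sq_integrals:
  fixes k :: nat assumes k: "k \<ge> 1"
  shows "((\<lambda>x. (cos (real k * x))^2) has_integral pi) {0..2*pi}"
        "((\<lambda>x. (sin (real k * x))^2) has_integral pi) {0..2*pi}"
proof -
  have k0: "real k > 0" using k by simp
  have ftc: "(f' has_integral (f (2*pi) - f 0)) {0..2*pi}"
    if "\<And>x. (f has_real_derivative f' x) (at x within {0..2*pi})" for f f' :: "real \<Rightarrow> real"
    by (rule fundamental_theorem_of_calculus) (use that has_real_derivative_iff_has_vector_derivative in auto)
  have c2a: "(cos y)^2 = 1/2 + cos (2*y)/2" for y :: real using cos_double_cos[of y] by linarith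
  have c2b: "(sin y)^2 = 1/2 - cos (2*y)/2" for y :: real using cos_double_sin[of y] by linarith
  have d1: "((\<lambda>x. x/2 + sin (2*real k*x)/(4*real k)) has_real_derivative (cos (real k * x))^2) (at x within {0..2*pi})" for x
  proof -
    have "((\<lambda>x. x/2 + sin (2*real k*x)/(4*real k)) has_real_derivative 1/2 + cos (2*real k*x) * (2*real k)/(4*real k)) (at x within {0..2*pi})"
      by (auto intro!: derivative_eq_intros)
    moreover have "1/2 + cos (2*real k*x) * (2*real k)/(4*real k) = (cos (real k * x))^2"
      using k0 c2a[of "real k * x"] by (simp add: field_simps)
    ultimately show ?thesis by simp
  qed
  have d2: "((\<lambda>x. x/2 - sin (2*real k*x)/(4*real k)) has_real_derivative (sin (real k * x))^2) (at x within {0..2*pi})" for x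
  proof -
    have "((\<lambda>x. x/2 - sin (2*real k*x)/(4*real k)) has_real_derivative 1/2 - cos (2*real k*x) * (2*real k)/(4*real k)) (at x within {0..2*pi})"
      by (auto intro!: derivative_eq_intros)
    moreover have "1/2 - cos (2*real k*x) * (2*real k)/(4*real k) = (sin (real k * x))^2"
      using k0 c2b[of "real k * x"] by (simp add: field_simps)
    ultimately show ?thesis by simp
  qed
  have s0: "sin (2*real k*(2*pi)) = 0" using sin_mult_2pi(1)[of "2*k"] by (simp add: mult.assoc)
  show "((\<lambda>x. (cos (real k * x))^2) has_integral pi) {0..2*pi}" using ftc[OF d1] s0 by simp
  show "((\<lambda>x. (sin (real k * x))^2) has_integral pi) {0..2*pi}" using ftc[OF d2] s0 by simp
qed


lemma cos_shift: "cos (real n * (x + 2*pi)) = cos (real n * x)" "sin (real n * (x + 2*pi)) = sin (real n * x)"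
proof -
  have "real n * (x + 2*pi) = real n * x + real n * (2*pi)" by (simp add: algebra_simps)
  then show "cos (real n * (x + 2*pi)) = cos (real n * x)" "sin (real n * (x + 2*pi)) = sin (real n * x)"
    by (simp_all add: cos_add sin_add sin_mult_2pi)
qed

lemma nonempty:
  fixes D :: real assumes D1: "D \<ge> 1"
  shows "\<exists>u v. H1per u v \<and> integral {0..2*pi} u = 0
              \<and> integral {0..2*pi} (\<lambda>x. (cmod (u x))^2) = 1
              \<and> integral {0..2*pi} (\<lambda>x. (cmod (v x))^2) = D"
proof -
  define n :: nat where "n = nat \<lceil>D\<rceil> + 1"
  have nD: "D \<le> real n" unfolding n_def by linarith
  have n2: "2 \<le> n" unfolding n_def using D1 by linarith
  have nn: "real n \<le> real n ^ 2"
  proof -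
    have "real n * 1 \<le> real n * real n" using n2 by (intro mult_left_mono) auto
    then show ?thesis by (simp add: power2_eq_square)
  qed
  have nD2: "D \<le> real n ^ 2" using nD nn by linarith
  have n21: "real n ^ 2 - 1 > 0"
  proof -
    have "(2::real) \<le> real n" using n2 by simp
    then show ?thesis using nn by linarith
  qed
  define B where "B = (D - 1) / (pi * (real n ^ 2 - 1))"
  define A where "A = 1/pi - B"
  have B0: "0 \<le> B" unfolding B_def using D1 n21 by simp
  have A0: "0 \<le> A"
  proof -
    have "A = (real n ^ 2 - D) / (pi * (real n ^ 2 - 1))" unfolding A_def B_def using n21 by (simp add: field_simps)
    then show ?thesis using nD2 n21 by simp
  qed
  have AB1: "pi * A + pi * B = 1" unfolding A_def by (simp add: field_simps)
  have ABD: "pi * A + pi * (real n ^ 2 * B) = D"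
  proof -
    have "pi * (B * (real n ^ 2 - 1)) = D - 1" unfolding B_def using n21 by (simp add: field_simps)
    moreover have "pi * A = 1 - pi * B" unfolding A_def by (simp add: field_simps)
    moreover have "pi * (B * (real n ^ 2 - 1)) = pi * (real n^2 * B) - pi * B" by (simp add: algebra_simps)
    ultimately show ?thesis by linarith
  qed
  define al where "al = sqrt A"
  define be where "be = sqrt B"
  have al2: "al^2 = A" unfolding al_def using A0 by simp
  have be2: "be^2 = B" unfolding be_def using B0 by simp
  define u where "u = (\<lambda>x. Complex (al * cos x) (be * cos (real n * x)))"
  define v where "v = (\<lambda>x. Complex (- al * sin x) (- be * real n * sin (real n * x)))"
  define U where "U = (\<lambda>x. Complex (al * sin x) (be * sin (real n * x) / real n))"
  have n0: "real n \<noteq> 0" using n2 by simp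
  have ud: "(u has_vector_derivative v x) (at x within S)" for x S
    unfolding u_def v_def has_vector_derivative_complex_iff
    by (auto intro!: derivative_eq_intros simp: algebra_simps)
  have Ud: "(U has_vector_derivative u x) (at x within S)" for x S
    unfolding U_def u_def has_vector_derivative_complex_iff using n0
    by (auto intro!: derivative_eq_intros simp: algebra_simps)
  have vform: "v = (\<lambda>x. complex_of_real (- al * sin x) + \<i> * complex_of_real (- be * real n * sin (real n * x)))"
    unfolding v_def by (simp add: Complex_eq)
  have vcont: "continuous_on {0..2*pi} v" unfolding vform by (intro continuous_intros)
  have per: "\<forall>x. u (x + 2*pi) = u x" unfolding u_def using cos_shift by simp
  have rep: "\<forall>x\<in>{0..2*pi}. u x = u 0 + integral {0..x} v"
  proof
    fix x :: real assume x: "x \<in> {0..2*pi}"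
    have "(v has_integral (u x - u 0)) {0..x}"
      by (rule fundamental_theorem_of_calculus) (use x ud in auto)
    then show "u x = u 0 + integral {0..x} v" by (simp add: integral_unique)
  qed
  have m0: "integral {0..2*pi} u = 0"
  proof -
    have "(u has_integral (U (2*pi) - U 0)) {0..2*pi}"
      by (rule fundamental_theorem_of_calculus) (use Ud in auto)
    moreover have "U (2*pi) - U 0 = 0" unfolding U_def using sin_mult_2pi(1)[of n] by (simp add: mult.commute)
    ultimately show ?thesis by (simp add: integral_unique)
  qed
  have T1: "((\<lambda>x. (cos x)^2) has_integral pi) {0..2*pi}" "((\<lambda>x. (sin x)^2) has_integral pi) {0..2*pi}"
    using trig_sq_integrals[of 1] by simp_all
  have Tn: "((\<lambda>x. (cos (real n * x))^2) has_integral pi) {0..2*pi}" "((\<lambda>x. (sin (real n * x))^2) has_integral pi) {0..2*pi}"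
    using trig_sq_integrals[of n] n2 by simp_all
  have uI: "((\<lambda>x. (cmod (u x))^2) has_integral 1) {0..2*pi}"
  proof -
    have "((\<lambda>x. A * (cos x)^2 + B * (cos (real n * x))^2) has_integral (A * pi + B * pi)) {0..2*pi}"
      by (intro has_integral_add has_integral_mult_right T1 Tn)
    moreover have "(cmod (u x))^2 = A * (cos x)^2 + B * (cos (real n * x))^2" for x
      unfolding u_def cmod_power2 by (simp add: power_mult_distrib al2 be2)
    ultimately show ?thesis using AB1 by (simp add: mult.commute)
  qed
  have vI: "((\<lambda>x. (cmod (v x))^2) has_integral D) {0..2*pi}"
  proof -
    have "((\<lambda>x. A * (sin x)^2 + (B * real n ^ 2) * (sin (real n * x))^2) has_integral (A * pi + (B * real n ^ 2) * pi)) {0..2*pi}"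
      by (intro has_integral_add has_integral_mult_right T1 Tn)
    moreover have "(cmod (v x))^2 = A * (sin x)^2 + (B * real n ^ 2) * (sin (real n * x))^2" for x
      unfolding v_def cmod_power2 by (simp add: power_mult_distrib al2 be2)
    ultimately show ?thesis using ABD by (simp add: algebra_simps)
  qed
  have H: "H1per u v" unfolding H1per_def
    using per absolutely_integrable_continuous_real[OF vcont] vI rep by blast
  show ?thesis using H m0 uI vI by (intro exI[of _ u] exI[of _ v]) (simp add: integral_unique)
qed


theorem theorem2p4:
  fixes D :: real
  assumes "D \<ge> 1"
  shows "VV D < sqrt D - 1 / pi"
proof -
  obtain B where B: "B < sqrt D - 1/pi"
    and Bb: "\<forall>u v. H1per u v \<and> integral {0..2*pi} u = 0
              \<and> integral {0..2*pi} (\<lambda>x. (cmod (u x))^2) = 1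
              \<and> integral {0..2*pi} (\<lambda>x. (cmod (v x))^2) = D \<longrightarrow> (cmod (u 0))^2 \<le> B"
    using uniform_bound[OF assms] by blast
  obtain u0 v0 where uv0: "H1per u0 v0 \<and> integral {0..2*pi} u0 = 0
              \<and> integral {0..2*pi} (\<lambda>x. (cmod (u0 x))^2) = 1
              \<and> integral {0..2*pi} (\<lambda>x. (cmod (v0 x))^2) = D"
    using nonempty[OF assms] by blast
  have "VV D \<le> B" unfolding VV_def
  proof (rule cSup_least)
    show "{(cmod (u 0))^2 | u v. H1per u v
              \<and> integral {0..2*pi} u = 0
              \<and> integral {0..2*pi} (\<lambda>x. (cmod (u x))^2) = 1
              \<and> integral {0..2*pi} (\<lambda>x. (cmod (v x))^2) = D} \<noteq> {}"
      using uv0 by blast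
  qed (use Bb in blast)
  then show ?thesis using B by simp
qed

end
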